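(* Let $n\ge1$ and let $T\in\mathcal{L}(\mathcal{H})$ be an $n$-EP operator. Then: (1) if $M$ is a closed subspace of $\mathcal{H}$ reducing $T$, then the restriction $T|_M$ (as an operator on $M$) is $n$-EP; (2) if $S=U^*TU$ for some unitary $U\in\mathcal{L}(\mathcal{H})$, then $S$ is $n$-EP.
   Context: $\mathcal{H}$ is a Hilbert space, $\mathcal{L}(\mathcal{H})$ the bounded operators on it. A closed subspace $M$ reduces $T$ if $T(M)\subset M$ and $T^*(M)\subset M$. For $T$ with closed range, $T^\dagger$ is its Moore–Penrose inverse (unique solution of $TT^\dagger T=T$, $T^\dagger TT^\dagger=T^\dagger$, $(T^\dagger T)^*=T^\dagger T$, $(TT^\dagger)^*=TT^\dagger$). For $n\ge1$, $T$ is $n$-EP if $T$ has closed range and $T^nT^\dagger=T^\dagger T^n$. *)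

theory Defs
  imports "HOL-Analysis.Analysis"
begin

(* An operator "restricted to a closed subspace M"
is handled by relativising every notion to the carrier M; the whole space is M = UNIV. *)

definition reduces :: "'a::real_inner set \<Rightarrow> ('a \<Rightarrow>\<^sub>L 'a) \<Rightarrow> bool" where
  "reduces M T \<longleftrightarrow> closed M \<and> subspace M \<and> T ` M \<subseteq> M \<and>
     (\<forall>Tstar :: 'a \<Rightarrow>\<^sub>L 'a. (\<forall>x y. inner (T x) y = inner x (Tstar y)) \<longrightarrow> Tstar ` M \<subseteq> M)"

definition selfadjoint_on :: "'a::real_inner set \<Rightarrow> ('a \<Rightarrow> 'a) \<Rightarrow> bool" where
  "selfadjoint_on M A \<longleftrightarrow> (\<forall>x\<in>M. \<forall>y\<in>M. inner (A x) y = inner x (A y))"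

definition is_MP_inverse_on :: "'a::real_inner set \<Rightarrow> ('a \<Rightarrow>\<^sub>L 'a) \<Rightarrow> ('a \<Rightarrow>\<^sub>L 'a) \<Rightarrow> bool" where
  "is_MP_inverse_on M T X \<longleftrightarrow> X ` M \<subseteq> M \<and>
     (\<forall>x\<in>M. T (X (T x)) = T x) \<and>
     (\<forall>x\<in>M. X (T (X x)) = X x) \<and>
     selfadjoint_on M (\<lambda>x. X (T x)) \<and>
     selfadjoint_on M (\<lambda>x. T (X x))"

definition n_EP_on :: "nat \<Rightarrow> 'a::real_inner set \<Rightarrow> ('a \<Rightarrow>\<^sub>L 'a) \<Rightarrow> bool" where
  "n_EP_on n M T \<longleftrightarrow> closed (T ` M) \<and>
     (\<exists>X. is_MP_inverse_on M T X \<and>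
        (\<forall>x\<in>M. (blinfun_apply T ^^ n) (X x) = X ((blinfun_apply T ^^ n) x)))"

definition n_EP :: "nat \<Rightarrow> ('a::real_inner \<Rightarrow>\<^sub>L 'a) \<Rightarrow> bool" where
  "n_EP n T \<longleftrightarrow> n_EP_on n UNIV T"

definition unitary_with_adjoint :: "('a::real_inner \<Rightarrow>\<^sub>L 'a) \<Rightarrow> ('a \<Rightarrow>\<^sub>L 'a) \<Rightarrow> bool" where
  "unitary_with_adjoint U Ustar \<longleftrightarrow> (\<forall>x y. inner (U x) y = inner x (Ustar y)) \<and>
     (\<forall>x. Ustar (U x) = x) \<and> (\<forall>x. U (Ustar x) = x)"

end

theory Submission
  imports Defs
begin

lemma proj_exists:
  fixes M :: "'a::{real_inner,complete_space} set"
  assumes cM: "closed M" and sM: "subspace M"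
  shows "\<exists>p\<in>M. \<forall>m\<in>M. inner (x - p) m = 0"
proof -
  define D where "D = (\<lambda>m. (norm (x - m))\<^sup>2) ` M"
  define d where "d = Inf D"
  have ne: "D \<noteq> {}" using sM subspace_0 unfolding D_def by auto
  have bdd: "bdd_below D" unfolding D_def by (auto intro: bdd_belowI[of _ 0])
  have dle: "\<And>m. m \<in> M \<Longrightarrow> d \<le> (norm (x - m))\<^sup>2"
    unfolding d_def using bdd unfolding D_def by (auto intro: cInf_lower)
  have "\<forall>k. \<exists>m\<in>M. (norm (x-m))^2 < d + 1/Suc k"
  proof
    fix k
    have "Inf D < d + 1/Suc k" unfolding d_def by simp
    then obtain y where "y \<in> D" "y < d + 1/Suc k" using cInf_less_iff[OF ne bdd] by blast
    then show "\<exists>m\<in>M. (norm (x-m))^2 < d + 1/Suc k" unfolding D_def by auto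
  qed
  then obtain s where s: "\<And>k. s k \<in> M" "\<And>k. (norm (x - s k))^2 < d + 1/Suc k" by metis
  have par: "(norm (s i - s j))^2 \<le> 2/Suc i + 2/Suc j" for i j
  proof -
    have mid: "(1/2) *\<^sub>R (s i + s j) \<in> M" using s sM by (simp add: subspace_add subspace_scale)
    have id: "(norm (s i - s j))^2 = 2*(norm (x - s i))^2 + 2*(norm (x - s j))^2 - 4*(norm (x - (1/2) *\<^sub>R (s i + s j)))^2"
      by (simp add: power2_norm_eq_inner inner_simps algebra_simps inner_commute)
    show ?thesis using id dle[OF mid] s(2)[of i] s(2)[of j] by linarith
  qed
  have "Cauchy s"
  proof (rule CauchyI)
    fix e :: real assume e: "0<e"
    obtain N::nat where N: "4 / e^2 < N" using reals_Archimedean2 by blast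
    show "\<exists>N. \<forall>m\<ge>N. \<forall>n\<ge>N. norm (s m - s n) < e"
    proof (intro exI allI impI)
      fix m n assume mn: "m \<ge> N" "n \<ge> N"
      have "2 / real (Suc m) < e^2/2" if "m \<ge> N" for m
      proof -
        have "4 / e^2 < Suc m" using N \<open>m \<ge> N\<close> by linarith
        then have "4 < Suc m * e^2" using e by (simp add: field_simps)
        then show ?thesis using e by (simp add: field_simps)
      qed
      note a = this[OF mn(1)] this[OF mn(2)]
      have "(norm (s m - s n))^2 < e^2" using par[of m n] a by linarith
      then show "norm (s m - s n) < e" using e by (simp add: power_less_imp_less_base)
    qed
  qed
  then obtain p where p: "s \<longlonglongrightarrow> p" using Cauchy_convergent_iff convergent_def by blast
  have pM: "p \<in> M" using cM s(1) p by (meson closed_sequentially)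
  have l1: "(\<lambda>k. (norm (x - s k))^2) \<longlonglongrightarrow> (norm (x-p))^2" by (intro tendsto_intros p)
  have l2: "(\<lambda>k. d + 1 / real (Suc k)) \<longlonglongrightarrow> d + 0"
    by (intro tendsto_intros LIMSEQ_inverse_real_of_nat[unfolded inverse_eq_divide])
  have "(norm (x-p))^2 \<le> d + 0" 
    by (rule LIMSEQ_le[OF l1 l2]) (use s(2) in \<open>auto intro: less_imp_le\<close>)
  then have dp: "(norm (x - p))^2 = d" using dle[OF pM] by simp
  show ?thesis
  proof (intro bexI[OF _ pM] ballI)
    fix m assume mM: "m \<in> M"
    show "inner (x - p) m = 0"
    proof (cases "m = 0")
      case True then show ?thesis by simp
    next
      case False
      define c where "c = inner (x - p) m"
      define t where "t = c / inner m m"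
      have mm: "inner m m > 0" using False by simp
      have qM: "p + t *\<^sub>R m \<in> M" using pM mM sM by (simp add: subspace_add subspace_scale)
      have "(norm (x - (p + t *\<^sub>R m)))^2 = (norm (x-p))^2 - 2*t*c + t^2 * inner m m"
        unfolding c_def power2_norm_eq_inner by (simp add: inner_simps algebra_simps inner_commute power2_eq_square)
      also have "\<dots> = d - c^2 / inner m m" using mm unfolding t_def dp by (simp add: field_simps power2_eq_square)
      finally have "c^2 / inner m m \<le> 0" using dle[OF qM] by linarith
      then have "c^2 \<le> 0" using mm by (simp add: divide_le_0_iff)
      then show ?thesis unfolding c_def by simp
    qed
  qed
qed

lemma proj_unique:
  assumes sM: "subspace M" and "p \<in> M" "q \<in> M"
    and hp: "\<forall>m\<in>M. inner (x - p) m = 0" and hq: "\<forall>m\<in>M. inner (x - q) m = 0"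
  shows "p = q"
proof -
  have pq: "p - q \<in> M" using assms by (simp add: subspace_diff)
  have "inner (p - q) (p - q) = inner (x - q) (p - q) - inner (x - p) (p - q)"
    by (simp add: inner_simps)
  also have "\<dots> = 0" using hp hq pq by simp
  finally show ?thesis by simp
qed

lemma riesz:
  fixes f :: "'a::{real_inner,complete_space} \<Rightarrow> real"
  assumes f: "bounded_linear f"
  shows "\<exists>z. \<forall>x. f x = inner z x"
proof (cases "\<forall>x. f x = 0")
  case True then show ?thesis by (intro exI[of _ 0]) simp
next
  case False
  then obtain v where v: "f v \<noteq> 0" by blast
  interpret f: bounded_linear f by fact
  define K where "K = {x. f x = 0}"
  have cK: "closed K" unfolding K_def
    using closed_vimage[of "{0}" f] f.continuous_on[of UNIV "\<lambda>x. x"] by (simp add: vimage_def continuous_on_id)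
  have sK: "subspace K" unfolding K_def subspace_def by (simp add: f.add f.scale f.zero)
  obtain p where pK: "p \<in> K" and hp: "\<forall>m\<in>K. inner (v - p) m = 0" using proj_exists[OF cK sK] by blast
  define w where "w = v - p"
  have fw: "f w = f v" using pK unfolding w_def K_def by (simp add: f.diff)
  then have w0: "w \<noteq> 0" using v by auto
  have ww: "inner w w > 0" using w0 by simp
  show ?thesis
  proof (intro exI allI)
    fix x
    have "x - (f x / f w) *\<^sub>R w \<in> K" unfolding K_def using fw v by (simp add: f.diff f.scale)
    then have "inner w (x - (f x / f w) *\<^sub>R w) = 0" using hp unfolding w_def by blast
    then have "inner w x = f x / f w * inner w w" by (simp add: inner_simps)
    then show "f x = inner ((f w / inner w w) *\<^sub>R w) x" using ww fw v by (simp add: inner_simps field_simps)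
  qed
qed

lemma adjoint_exists:
  fixes T :: "'a::{real_inner,complete_space} \<Rightarrow>\<^sub>L 'a"
  shows "\<exists>Ts::'a\<Rightarrow>\<^sub>L'a. \<forall>x y. inner (T x) y = inner x (Ts y)"
proof -
  have "\<forall>y. \<exists>z. \<forall>x. inner (T x) y = inner x z"
  proof
    fix y
    have "bounded_linear (\<lambda>x. inner (T x) y)"
      by (intro bounded_linear_compose[OF bounded_linear_inner_left] blinfun.bounded_linear_right)
    then obtain z where "\<forall>x. inner (T x) y = inner z x" using riesz by blast
    then show "\<exists>z. \<forall>x. inner (T x) y = inner x z" by (metis inner_commute)
  qed
  then obtain g where g: "\<And>x y. inner (T x) y = inner x (g y)" by metis
  have eq: "a = b" if "\<And>x. inner x a = inner x b" for a b :: 'a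
  proof -
    have "inner (a - b) (a - b) = 0" using that[of "a - b"] by (simp add: inner_simps)
    then show ?thesis by simp
  qed
  have bl: "bounded_linear g"
  proof (rule bounded_linear_intro)
    show "g (a + b) = g a + g b" for a b
      by (rule eq) (simp add: inner_simps g[symmetric] blinfun.add_right)
    show "g (r *\<^sub>R a) = r *\<^sub>R g a" for r a
      by (rule eq) (simp add: inner_simps g[symmetric])
    show "norm (g y) \<le> norm y * norm T" for y
    proof -
      have "(norm (g y))^2 = inner (T (g y)) y" by (simp add: g power2_norm_eq_inner)
      also have "\<dots> \<le> norm (T (g y)) * norm y" by (rule norm_cauchy_schwarz)
      also have "\<dots> \<le> norm T * norm (g y) * norm y" by (simp add: mult_right_mono norm_blinfun)
      finally have "norm (g y) * norm (g y) \<le> (norm y * norm T) * norm (g y)" by (simp add: power2_eq_square algebra_simps)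
      then show ?thesis by (cases "norm (g y) = 0") auto
    qed
  qed
  show ?thesis using g bounded_linear_Blinfun_apply[OF bl] by (intro exI[of _ "Blinfun g"]) simp
qed

lemma mp_unique:
  fixes T X Y :: "'a::real_inner \<Rightarrow> 'a"
  assumes x1: "\<And>x. T (X (T x)) = T x" and x2: "\<And>x. X (T (X x)) = X x"
    and x3: "\<And>x y. inner (X (T x)) y = inner x (X (T y))"
    and x4: "\<And>x y. inner (T (X x)) y = inner x (T (X y))"
    and y1: "\<And>x. T (Y (T x)) = T x" and y2: "\<And>x. Y (T (Y x)) = Y x"
    and y3: "\<And>x y. inner (Y (T x)) y = inner x (Y (T y))"
    and y4: "\<And>x y. inner (T (Y x)) y = inner x (T (Y y))"
  shows "X = Y"
proof -
  have eq: "a = b" if "\<And>y. inner a y = inner b y" for a b :: 'a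
  proof -
    have "inner (a - b) (a - b) = 0" using that[of "a - b"] by (simp add: inner_simps)
    then show ?thesis by simp
  qed
  have XT: "X (T x) = Y (T x)" for x
  proof (rule eq)
    fix y
    have "inner (X (T x)) y = inner (X (T (Y (T x)))) y" by (simp add: y1)
    also have "\<dots> = inner (Y (T x)) (X (T y))" by (simp add: x3)
    also have "\<dots> = inner x (Y (T (X (T y))))" by (simp add: y3)
    also have "\<dots> = inner (Y (T x)) y" by (simp add: x1 y3)
    finally show "inner (X (T x)) y = inner (Y (T x)) y" .
  qed
  have TX: "T (X x) = T (Y x)" for x
  proof (rule eq)
    fix y
    have "inner (T (X x)) y = inner (T (Y (T (X x)))) y" by (simp add: y1)
    also have "\<dots> = inner (T (X x)) (T (Y y))" by (simp add: y4)
    also have "\<dots> = inner x (T (X (T (Y y))))" by (simp add: x4)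
    also have "\<dots> = inner (T (Y x)) y" by (simp add: x1 y4)
    finally show "inner (T (X x)) y = inner (T (Y x)) y" .
  qed
  show ?thesis
  proof
    fix x
    have "X x = X (T (X x))" by (simp add: x2)
    also have "\<dots> = X (T (Y x))" by (simp add: TX)
    also have "\<dots> = Y (T (Y x))" by (simp add: XT)
    also have "\<dots> = Y x" by (simp add: y2)
    finally show "X x = Y x" .
  qed
qed

lemma half_lemma:
  fixes a b :: "'b::real_vector"
  assumes h: "a = 2 *\<^sub>R b - a" shows "a = b"
proof -
  have "(2::real) *\<^sub>R a = a + a" by (rule scaleR_2)
  also have "\<dots> = (2 *\<^sub>R b - a) + a" using h by simp
  also have "\<dots> = 2 *\<^sub>R b" by simp
  finally show ?thesis by simp
qed

theorem mainTheorem7: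
  fixes T :: "'a::{real_inner, complete_space} \<Rightarrow>\<^sub>L 'a" and n :: nat
  assumes "n \<ge> 1" and "n_EP n T"
  shows "(\<forall>M. reduces M T \<longrightarrow> n_EP_on n M T) \<and>
         (\<forall>U Ustar S. unitary_with_adjoint U Ustar \<and> S = Ustar o\<^sub>L T o\<^sub>L U \<longrightarrow> n_EP n S)"
proof -
  have cl: "closed (range T)" and "\<exists>X. is_MP_inverse_on UNIV T X \<and>
        (\<forall>x\<in>UNIV. (blinfun_apply T ^^ n) (X x) = X ((blinfun_apply T ^^ n) x))"
    using assms(2) unfolding n_EP_def n_EP_on_def by auto
  then obtain X where mp: "is_MP_inverse_on UNIV T X"
    and cm': "\<forall>x\<in>UNIV. (blinfun_apply T ^^ n) (X x) = X ((blinfun_apply T ^^ n) x)" by blast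
  have cm: "\<And>x. (blinfun_apply T ^^ n) (X x) = X ((blinfun_apply T ^^ n) x)" using cm' by simp
  have x1: "\<And>x. T (X (T x)) = T x" and x2: "\<And>x. X (T (X x)) = X x"
    and x3: "\<And>x y. inner (X (T x)) y = inner x (X (T y))"
    and x4: "\<And>x y. inner (T (X x)) y = inner x (T (X y))"
    using mp unfolding is_MP_inverse_on_def selfadjoint_on_def by simp_all
  have eq: "a = b" if "\<And>y. inner a y = inner b y" for a b :: 'a
  proof -
    have "inner (a - b) (a - b) = 0" using that[of "a - b"] by (simp add: inner_simps)
    then show ?thesis by simp
  qed
  have part1: "n_EP_on n M T" if red: "reduces M T" for M
  proof -
    obtain Ts :: "'a \<Rightarrow>\<^sub>L 'a" where Tsall: "\<forall>x y. inner (T x) y = inner x (Ts y)" using adjoint_exists by blast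
    note Ts = Tsall[rule_format]
    have cM: "closed M" and sM: "subspace M" and TM: "T ` M \<subseteq> M"
      and h: "\<forall>Tstar :: 'a \<Rightarrow>\<^sub>L 'a. (\<forall>x y. inner (T x) y = inner x (Tstar y)) \<longrightarrow> Tstar ` M \<subseteq> M"
      using red unfolding reduces_def by simp_all
    have TsM: "Ts ` M \<subseteq> M" using h[rule_format, OF Ts] .
    define P where "P x = (SOME p. p \<in> M \<and> (\<forall>m\<in>M. inner (x - p) m = 0))" for x
    have P: "P x \<in> M \<and> (\<forall>m\<in>M. inner (x - P x) m = 0)" for x
    proof -
      obtain p where "p \<in> M" "\<forall>m\<in>M. inner (x - p) m = 0" using proj_exists[OF cM sM, of x] by blast
      then have ex: "\<exists>p. p \<in> M \<and> (\<forall>m\<in>M. inner (x - p) m = 0)" by blast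
      show ?thesis unfolding P_def by (rule someI_ex[OF ex])
    qed
    have Pchar: "P x = p" if "p \<in> M" "\<forall>m\<in>M. inner (x - p) m = 0" for x p
      using proj_unique[OF sM, of "P x" p x] P[of x] that by simp
    have PM: "P m = m" if "m \<in> M" for m using Pchar[OF that] by simp
    have PT: "P (T x) = T (P x)" for x
    proof (rule Pchar)
      show "T (P x) \<in> M" using P TM by blast
      show "\<forall>m\<in>M. inner (T x - T (P x)) m = 0"
      proof
        fix m assume "m \<in> M"
        then have "Ts m \<in> M" using TsM by blast
        then have "inner (x - P x) (Ts m) = 0" using P by blast
        then show "inner (T x - T (P x)) m = 0" by (simp add: Ts blinfun.diff_right[symmetric])
      qed
    qed
    define W where "W x = 2 *\<^sub>R P x - x" for x
    have WT: "W (T x) = T (W x)" for x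
      unfolding W_def by (simp add: PT blinfun.diff_right blinfun.scaleR_right)
    have PW: "P (W x) = P x" for x
    proof (rule Pchar)
      show "P x \<in> M" using P by blast
      show "\<forall>m\<in>M. inner (W x - P x) m = 0"
      proof
        fix m assume "m \<in> M"
        then have "inner (x - P x) m = 0" using P by blast
        moreover have "W x - P x = - (x - P x)" unfolding W_def by (simp add: algebra_simps scaleR_2)
        ultimately show "inner (W x - P x) m = 0" by (simp add: inner_diff_left)
      qed
    qed
    have WW: "W (W x) = x" for x using PW[of x] unfolding W_def by (simp add: algebra_simps scaleR_2)
    have Psa: "inner (P x) y = inner x (P y)" for x y
    proof -
      have a: "inner (P x) (y - P y) = 0" using P[of y] P[of x] by (simp add: inner_commute)
      have b: "inner (x - P x) (P y) = 0" using P[of y] P[of x] by simp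
      show ?thesis using a b by (simp add: inner_simps)
    qed
    have Wsa: "inner (W x) y = inner x (W y)" for x y
      unfolding W_def by (simp add: inner_simps Psa)
    define Y where "Y x = W (X (W x))" for x
    have "blinfun_apply X = Y"
    proof (rule mp_unique[of "blinfun_apply T"])
      show "T (X (T x)) = T x" "X (T (X x)) = X x" for x by (simp_all add: x1 x2)
      show "inner (X (T x)) y = inner x (X (T y))" "inner (T (X x)) y = inner x (T (X y))" for x y
        by (simp_all add: x3 x4)
      show "T (Y (T x)) = T x" for x
      proof -
        have "T (Y (T x)) = T (W (X (T (W x))))" unfolding Y_def by (simp only: WT)
        also have "\<dots> = W (T (X (T (W x))))" by (simp only: WT)
        also have "\<dots> = W (T (W x))" by (simp only: x1)
        also have "\<dots> = T x" by (simp only: WT WW)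
        finally show ?thesis .
      qed
      show "Y (T (Y x)) = Y x" for x
      proof -
        have "Y (T (Y x)) = W (X (T (W (W (X (W x))))))" unfolding Y_def by (simp only: WT)
        also have "\<dots> = W (X (W x))" by (simp only: WW x2)
        finally show ?thesis unfolding Y_def .
      qed
      show "inner (Y (T x)) y = inner x (Y (T y))" for x y
      proof -
        have "inner (Y (T x)) y = inner (W (X (T (W x)))) y" unfolding Y_def by (simp only: WT)
        also have "\<dots> = inner (X (T (W x))) (W y)" by (rule Wsa)
        also have "\<dots> = inner (W x) (X (T (W y)))" by (rule x3)
        also have "\<dots> = inner x (W (X (T (W y))))" by (rule Wsa)
        also have "\<dots> = inner x (Y (T y))" unfolding Y_def by (simp only: WT)
        finally show ?thesis .
      qed
      show "inner (T (Y x)) y = inner x (T (Y y))" for x y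
      proof -
        have "inner (T (Y x)) y = inner (W (T (X (W x)))) y" unfolding Y_def by (simp only: WT)
        also have "\<dots> = inner (T (X (W x))) (W y)" by (rule Wsa)
        also have "\<dots> = inner (W x) (T (X (W y)))" by (rule x4)
        also have "\<dots> = inner x (W (T (X (W y))))" by (rule Wsa)
        also have "\<dots> = inner x (T (Y y))" unfolding Y_def by (simp only: WT)
        finally show ?thesis .
      qed
    qed
    then have XW: "X (W z) = W (X z)" for z
    proof -
      have "X (W z) = W (X (W (W z)))" using \<open>blinfun_apply X = Y\<close> unfolding Y_def by (rule fun_cong)
      then show ?thesis by (simp only: WW)
    qed
    have XM: "X m \<in> M" if "m \<in> M" for m
    proof -
      have "W m = m" using PM[OF that] unfolding W_def by (simp add: algebra_simps scaleR_2)
      then have "X m = W (X m)" using XW[of m] by simp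
      then have "X m = P (X m)" unfolding W_def by (rule half_lemma)
      then show ?thesis using P[of "X m"] by simp
    qed
    have TMeq: "T ` M = range T \<inter> M"
    proof
      show "T ` M \<subseteq> range T \<inter> M" using TM by blast
      show "range T \<inter> M \<subseteq> T ` M"
      proof
        fix y assume "y \<in> range T \<inter> M"
        then obtain x where y: "y = T x" "y \<in> M" by blast
        then have "y = T (P x)" using PM[of y] PT[of x] by simp
        then show "y \<in> T ` M" using P by blast
      qed
    qed
    show ?thesis unfolding n_EP_on_def is_MP_inverse_on_def selfadjoint_on_def
      using TMeq cl cM XM x1 x2 x3 x4 cm by (intro conjI exI[of _ X]) auto
  qed
  have part2: "n_EP n S" if un: "unitary_with_adjoint U Ustar" and S: "S = Ustar o\<^sub>L T o\<^sub>L U" for U Ustar S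
  proof -
    have u1: "\<And>x y. inner (U x) y = inner x (Ustar y)" and u2: "\<And>x. Ustar (U x) = x"
      and u3: "\<And>x. U (Ustar x) = x" using un unfolding unitary_with_adjoint_def by auto
    have u4: "inner (Ustar x) y = inner x (U y)" for x y by (metis u1 inner_commute)
    have Sx: "S x = Ustar (T (U x))" for x using S by simp
    have Spow: "(blinfun_apply S ^^ k) x = Ustar ((blinfun_apply T ^^ k) (U x))" for k x
      by (induction k) (simp_all add: u2 Sx u3)
    have rS: "range S = U -` range T"
    proof
      show "range S \<subseteq> U -` range T" using Sx u3 by auto
      show "U -` range T \<subseteq> range S"
      proof
        fix x assume "x \<in> U -` range T"
        then obtain z where "U x = T z" by blast
        then have "x = S (Ustar z)" using Sx u2 u3 by metis
        then show "x \<in> range S" by blast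
      qed
    qed
    have clS: "closed (range S)" unfolding rS
      by (intro closed_vimage cl linear_continuous_on blinfun.bounded_linear_right)
    define Y where "Y = Ustar o\<^sub>L X o\<^sub>L U"
    have Yx: "Y x = Ustar (X (U x))" for x unfolding Y_def by simp
    show ?thesis unfolding n_EP_def n_EP_on_def is_MP_inverse_on_def selfadjoint_on_def
    proof (intro conjI exI[of _ Y] ballI)
      show "closed (range S)" by fact
      show "Y ` UNIV \<subseteq> UNIV" by simp
      show "S (Y (S x)) = S x" for x by (simp add: Sx Yx u3 x1)
      show "Y (S (Y x)) = Y x" for x by (simp add: Sx Yx u3 x2)
      show "inner (Y (S x)) y = inner x (Y (S y))" for x y by (simp add: Sx Yx u3 u4 u1 x3)
      show "inner (S (Y x)) y = inner x (S (Y y))" for x y by (simp add: Sx Yx u3 u4 u1 x4)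
      show "(blinfun_apply S ^^ n) (Y x) = Y ((blinfun_apply S ^^ n) x)" for x
        by (simp add: Spow Yx u3 cm)
    qed
  qed
  show ?thesis using part1 part2 by blast
qed

end
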